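(* Let $p>3$ be a prime, $n$ a positive integer, $d=\frac{p^n+3}{2}$ and $F(x)=x^d$ on $\mathrm{GF}(p^n)$, and let $c=-1$. If $p^n\equiv1\pmod4$ then ${}_c\Delta_F\le4$, and if $p^n\equiv3\pmod4$ then ${}_c\Delta_F\le3$.
   Context: For a function $F:\mathrm{GF}(p^n)\to\mathrm{GF}(p^n)$ and $a,b,c\in\mathrm{GF}(p^n)$, let ${}_c\Delta_F(a,b)=\#\{x\in\mathrm{GF}(p^n): F(x+a)-cF(x)=b\}$. The $c$-differential uniformity of $F$ is ${}_c\Delta_F=\max\{{}_c\Delta_F(a,b): a,b\in\mathrm{GF}(p^n),\ \text{and } a\neq 0 \text{ if } c=1\}$. *)

theory Defs
  imports Main "HOL-Computational_Algebra.Primes"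
begin

definition c_diff_count :: "('a::{finite,field} \<Rightarrow> 'a) \<Rightarrow> 'a \<Rightarrow> 'a \<Rightarrow> 'a \<Rightarrow> nat" where
  "c_diff_count F c a b = card {x. F (x + a) - c * F x = b}"

definition c_diff_uniformity :: "('a::{finite,field} \<Rightarrow> 'a) \<Rightarrow> 'a \<Rightarrow> nat" where
  "c_diff_uniformity F c = Max {c_diff_count F c a b | a b. c \<noteq> 1 \<or> a \<noteq> 0}"

end

theory Submission
  imports Defs
begin

lemma card_even_inv:
  fixes f :: "'b \<Rightarrow> 'b"
  assumes "finite S" "\<forall>x\<in>S. f x \<in> S" "\<forall>x. f (f x) = x" "\<forall>x. f x \<noteq> x"
  shows "even (card S)"
  using assms
proof (induction "card S" arbitrary: S rule: less_induct)
  case less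
  show ?case
  proof (cases "S = {}")
    case True then show ?thesis by simp
  next
    case False
    then obtain x where x: "x \<in> S" by blast
    have fx: "f x \<in> S" using less x by blast
    let ?T = "S - {x, f x}"
    have c2: "card {x, f x} = 2" using less(5) by (metis card_2_iff)
    have sub: "{x, f x} \<subseteq> S" using x fx by blast
    have cT: "card ?T = card S - 2" using card_Diff_subset[OF _ sub] c2 by simp
    have ge: "card S \<ge> 2" using card_mono[OF less(2) sub] c2 by simp
    have cl: "\<forall>y\<in>?T. f y \<in> ?T"
    proof
      fix y assume y: "y \<in> ?T"
      have "f y \<noteq> x" using y less(4) by (metis Diff_iff insert_iff)
      moreover have "f y \<noteq> f x" using y less(4) by (metis Diff_iff insert_iff)
      ultimately show "f y \<in> ?T" using y less(3) by blast
    qed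
    have "even (card ?T)"
      using less(1)[of ?T] cT ge less(2,4,5) cl by simp
    then show ?thesis using cT ge by (simp add: dvd_diff_nat)
  qed
qed

lemma two_ne_zero_odd:
  assumes "odd (card (UNIV :: 'a::{finite,field} set))"
  shows "(2::'a) \<noteq> 0"
proof
  assume h: "(2::'a) = 0"
  have "even (card (UNIV :: 'a set))"
  proof (rule card_even_inv[where f = "\<lambda>x. x + 1"])
    show "\<forall>x. x + 1 + 1 = (x::'a)"
    proof
      fix x :: 'a have "x + 1 + 1 = x + 2" by (simp add: algebra_simps)
      then show "x + 1 + 1 = x" using h by simp
    qed
  qed auto
  with assms show False by simp
qed

lemma fermat_field:
  fixes x :: "'a::{finite,field}"
  assumes "x \<noteq> 0"
  shows "x ^ (card (UNIV::'a set) - 1) = 1"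
proof -
  let ?S = "UNIV - {0::'a}"
  have bij: "bij_betw ((*) x) ?S ?S"
    by (rule bij_betw_byWitness[where f' = "(*) (inverse x)"]) (use assms in \<open>auto simp: field_simps\<close>)
  have "prod (\<lambda>y. x*y) ?S = prod (\<lambda>y. y) ?S"
    using prod.reindex_bij_betw[OF bij, of "\<lambda>y. y"] by simp
  moreover have "prod (\<lambda>y. x*y) ?S = x ^ card ?S * prod (\<lambda>y. y) ?S"
    by (simp add: prod.distrib)
  moreover have "prod (\<lambda>y. y) ?S \<noteq> 0" by simp
  moreover have "card ?S = card (UNIV::'a set) - 1" by (simp add: card_Diff_singleton)
  ultimately show ?thesis by simp
qed

lemma quad_card:
  fixes k :: "'a::{finite,field}"
  shows "card {y. y * (y + 1) = k} \<le> 2"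
proof (cases "{y. y * (y + 1) = k} = {}")
  case True then show ?thesis by simp
next
  case False
  then obtain r where r: "r * (r + 1) = k" by blast
  have "{y. y * (y + 1) = k} \<subseteq> {r, -1 - r}"
  proof
    fix y assume "y \<in> {y. y * (y + 1) = k}"
    then have "y * (y+1) = r * (r+1)" using r by simp
    then have "(y - r) * (y + r + 1) = 0" by (simp add: algebra_simps)
    then have "y - r = 0 \<or> y + r + 1 = 0" by simp
    then have "y = r \<or> y = -1 - r" by (auto simp: algebra_simps eq_neg_iff_add_eq_0)
    then show "y \<in> {r, -1 - r}" by simp
  qed
  then have "card {y. y * (y + 1) = k} \<le> card {r, -1 - r}" by (rule card_mono[rotated]) simp
  also have "\<dots> \<le> 2" by (simp add: card_insert_le_m1)
  finally show ?thesis .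
qed

lemma sq_card:
  fixes k :: "'a::{finite,field}"
  shows "card {y. y^2 = k} \<le> 2"
proof (cases "{y. y^2 = k} = {}")
  case True then show ?thesis by simp
next
  case False
  then obtain r where r: "r^2 = k" by blast
  have "{y. y^2 = k} \<subseteq> {r, - r}"
  proof
    fix y assume "y \<in> {y. y^2 = k}"
    then have "y^2 = r^2" using r by simp
    then show "y \<in> {r, - r}" by (auto simp: power2_eq_iff)
  qed
  then have "card {y. y^2 = k} \<le> card {r, - r}" by (rule card_mono[rotated]) simp
  also have "\<dots> \<le> 2" by (simp add: card_insert_le_m1)
  finally show ?thesis .
qed

lemma eta_pm:
  fixes x :: "'a::{finite,field}"
  assumes oq: "odd (card (UNIV::'a set))" and hd: "h = (card (UNIV::'a set) - 1) div 2"
    and x: "x \<noteq> 0"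
  shows "x ^ h = 1 \<or> x ^ h = -1"
proof -
  have ev: "even (card (UNIV::'a set) - 1)" using oq by simp
  have "h * 2 = card (UNIV::'a set) - 1" unfolding hd using ev by simp
  then have "(x ^ h)^2 = 1" using fermat_field[OF x] by (metis power_mult)
  then show ?thesis by (simp add: power2_eq_1_iff)
qed

lemma half2: fixes x :: "'a::field" shows "(2::'a) \<noteq> 0 \<Longrightarrow> 2 * (x / 2) = x"
  by (simp only: times_divide_eq_right nonzero_mult_div_cancel_left not_False_eq_True)

lemma other_root:
  fixes y1 y2 :: "'a::field"
  assumes "y2 * (y2 + 1) = y1 * (y1 + 1)"
  shows "y2 = y1 \<or> y2 = (-1) * (y1 + 1)"
proof -
  have "(y2 - y1) * (y2 + (y1 + 1)) = 0" using assms by (simp add: algebra_simps)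
  then have "y2 - y1 = 0 \<or> y2 + (y1 + 1) = 0" by simp
  then show ?thesis
  proof
    assume "y2 - y1 = 0" then show ?thesis by simp
  next
    assume "y2 + (y1 + 1) = 0"
    then have "y2 = - (y1 + 1)" by (simp only: eq_neg_iff_add_eq_0)
    then show ?thesis by simp
  qed
qed

lemma h_even: "(q::nat) mod 4 = 1 \<Longrightarrow> even ((q - 1) div 2)"
proof -
  assume a: "q mod 4 = 1"
  have "q = 4 * (q div 4) + 1" using div_mult_mod_eq[of q 4] a by simp
  then have "(q - 1) div 2 = 2 * (q div 4)" by (metis add_diff_cancel_right' mult.assoc nonzero_mult_div_cancel_left num_double numeral_times_numeral zero_neq_numeral)
  then show ?thesis by simp
qed

lemma h_odd: "(q::nat) mod 4 = 3 \<Longrightarrow> odd ((q - 1) div 2)"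
proof -
  assume a: "q mod 4 = 3"
  have "q = 4 * (q div 4) + 3" using div_mult_mod_eq[of q 4] a by simp
  then have "(q - 1) div 2 = 2 * (q div 4) + 1" by simp
  then show ?thesis by simp
qed

lemma count_a1:
  fixes b :: "'a::{finite,field}"
  assumes oq: "odd (card (UNIV::'a set))" and q5: "card (UNIV::'a set) \<ge> 5"
    and hd: "h = (card (UNIV::'a set) - 1) div 2"
  shows "(card (UNIV::'a set) mod 4 = 1 \<longrightarrow> card {y. (y+1)^(h+2) + y^(h+2) = b} \<le> 4) \<and>
         (card (UNIV::'a set) mod 4 = 3 \<longrightarrow> card {y. (y+1)^(h+2) + y^(h+2) = b} \<le> 3)"
proof -
  define E where "E = (\<lambda>y::'a. y ^ h)"
  have two: "(2::'a) \<noteq> 0" using two_ne_zero_odd[OF oq] .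
  have h1: "h \<ge> 1" using hd q5 by simp
  have E0: "E 0 = 0" using h1 by (simp add: E_def)
  have Emul: "\<And>x y. E (x*y) = E x * E y" by (simp add: E_def power_mult_distrib)
  have Epm: "\<And>x. x \<noteq> 0 \<Longrightarrow> E x = 1 \<or> E x = -1" unfolding E_def using eta_pm[OF oq hd] by blast
  have Epow: "\<And>y. y^(h+2) = E y * y^2" by (simp add: E_def power_add power2_eq_square)
  have om: "(1::'a) \<noteq> -1"
  proof
    assume a: "(1::'a) = -1"
    from a have "(1::'a) + 1 = 1 + (-1)" by (rule arg_cong)
    then have "(2::'a) = 0" by simp
    then show False using two by simp
  qed
  have Em1a: "card (UNIV::'a set) mod 4 = 1 \<Longrightarrow> E (-1) = 1"
  proof -
    assume "card (UNIV::'a set) mod 4 = 1"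
    then have "even h" using hd h_even by simp
    then show ?thesis by (simp add: E_def)
  qed
  have Em1b: "card (UNIV::'a set) mod 4 = 3 \<Longrightarrow> E (-1) = -1"
  proof -
    assume "card (UNIV::'a set) mod 4 = 3"
    then have "odd h" using hd h_odd by simp
    then show ?thesis by (simp add: E_def)
  qed
  define S where "S = {y. (y+1)^(h+2) + y^(h+2) = b}"
  define Z where "Z = S \<inter> {0, -1}"
  define SA where "SA = {y\<in>S. E y = 1 \<and> E (y+1) = 1}"
  define SB where "SB = {y\<in>S. E y = -1 \<and> E (y+1) = -1}"
  define SC where "SC = {y\<in>S. E y = -1 \<and> E (y+1) = 1}"
  define SD where "SD = {y\<in>S. E y = 1 \<and> E (y+1) = -1}"
  have Ssub: "S \<subseteq> Z \<union> SA \<union> SB \<union> SC \<union> SD"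
  proof
    fix y assume y: "y \<in> S"
    show "y \<in> Z \<union> SA \<union> SB \<union> SC \<union> SD"
    proof (cases "y = 0 \<or> y = -1")
      case True then show ?thesis using y by (auto simp: Z_def)
    next
      case False
      then have "y \<noteq> 0" "y + 1 \<noteq> 0" by (auto simp: eq_neg_iff_add_eq_0 add.commute)
      then have "E y = 1 \<or> E y = -1" "E (y+1) = 1 \<or> E (y+1) = -1" using Epm by auto
      then show ?thesis using y unfolding SA_def SB_def SC_def SD_def by auto
    qed
  qed
  have cS: "card S \<le> card Z + card SA + card SB + card SC + card SD"
  proof -
    have 1: "card S \<le> card (Z \<union> SA \<union> SB \<union> SC \<union> SD)" by (rule card_mono[OF _ Ssub]) simp
    have 2: "card (Z \<union> SA \<union> SB \<union> SC \<union> SD) \<le> card (Z \<union> SA \<union> SB \<union> SC) + card SD" by (rule card_Un_le)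
    have 3: "card (Z \<union> SA \<union> SB \<union> SC) \<le> card (Z \<union> SA \<union> SB) + card SC" by (rule card_Un_le)
    have 4: "card (Z \<union> SA \<union> SB) \<le> card (Z \<union> SA) + card SB" by (rule card_Un_le)
    have 5: "card (Z \<union> SA) \<le> card Z + card SA" by (rule card_Un_le)
    from 1 2 3 4 5 show ?thesis by linarith
  qed
  have Sdef: "\<And>y. y \<in> S \<longleftrightarrow> E (y+1) * (y+1)^2 + E y * y^2 = b" by (simp only: S_def mem_Collect_eq Epow)
  have fA: "\<And>y. y \<in> SA \<Longrightarrow> y * (y+1) = (b-1)/2"
  proof -
    fix y assume "y \<in> SA"
    then have m: "y \<in> S" and e: "E y = 1" "E (y+1) = 1" by (auto simp: SA_def)
    have "E (y+1) * (y+1)^2 + E y * y^2 = b" using m Sdef by blast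
    with e have "(y+1)^2 + y^2 = b" by simp
    then have "2 * (y*(y+1)) = b - 1" by (simp add: algebra_simps power2_eq_square)
    then show "y * (y+1) = (b-1)/2" using two by (simp add: field_simps)
  qed
  have fB: "\<And>y. y \<in> SB \<Longrightarrow> y * (y+1) = -((b+1)/2)"
  proof -
    fix y assume "y \<in> SB"
    then have m: "y \<in> S" and e: "E y = -1" "E (y+1) = -1" by (auto simp: SB_def)
    have "E (y+1) * (y+1)^2 + E y * y^2 = b" using m Sdef by blast
    with e have "-((y+1)^2) - y^2 = b" by simp
    then have "2 * (y*(y+1)) = -(b + 1)" by (simp add: algebra_simps power2_eq_square)
    then show "y * (y+1) = -((b+1)/2)" using two by (simp add: field_simps)
  qed
  have fC: "\<And>y. y \<in> SC \<Longrightarrow> y = (b-1)/2"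
  proof -
    fix y assume "y \<in> SC"
    then have m: "y \<in> S" and e: "E y = -1" "E (y+1) = 1" by (auto simp: SC_def)
    have "E (y+1) * (y+1)^2 + E y * y^2 = b" using m Sdef by blast
    with e have "(y+1)^2 - y^2 = b" by simp
    then have "2 * y = b - 1" by (simp add: algebra_simps power2_eq_square)
    then show "y = (b-1)/2" using two by (simp add: field_simps)
  qed
  have fD: "\<And>y. y \<in> SD \<Longrightarrow> y = -((b+1)/2)"
  proof -
    fix y assume "y \<in> SD"
    then have m: "y \<in> S" and e: "E y = 1" "E (y+1) = -1" by (auto simp: SD_def)
    have "E (y+1) * (y+1)^2 + E y * y^2 = b" using m Sdef by blast
    with e have "-((y+1)^2) + y^2 = b" by simp
    then have "2 * y = -(b + 1)" by (simp add: algebra_simps power2_eq_square)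
    then show "y = -((b+1)/2)" using two by (simp add: field_simps)
  qed
  have fZ0: "0 \<in> S \<Longrightarrow> b = 1" using Sdef E0 by (simp add: E_def)
  have fZ1: "-1 \<in> S \<Longrightarrow> b = E (-1)" using Sdef E0 by simp
  have cA: "card SA \<le> 2"
    by (rule le_trans[OF card_mono quad_card[of "(b-1)/2"]]) (auto dest: fA)
  have cB: "card SB \<le> 2"
    by (rule le_trans[OF card_mono quad_card[of "-((b+1)/2)"]]) (auto dest: fB)
  have cC: "card SC \<le> 1"
    by (rule le_trans[OF card_mono[of "{(b-1)/2}"]]) (auto dest: fC)
  have cD: "card SD \<le> 1"
    by (rule le_trans[OF card_mono[of "{-((b+1)/2)}"]]) (auto dest: fD)
  have cZ: "card Z \<le> 2"
    by (rule le_trans[OF card_mono[of "{0,-1}"]]) (auto simp: Z_def card_insert_le_m1)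
  define u where "u = E ((b-1)/2)"
  define v where "v = E ((b+1)/2)"
  have uA: "SA \<noteq> {} \<Longrightarrow> u = 1"
  proof -
    assume "SA \<noteq> {}" then obtain y where y: "y \<in> SA" by blast
    then have "u = E y * E (y+1)" using fA[OF y] Emul u_def by metis
    then show "u = 1" using y by (simp add: SA_def)
  qed
  have vB: "SB \<noteq> {} \<Longrightarrow> E (-1) * v = 1"
  proof -
    assume "SB \<noteq> {}" then obtain y where y: "y \<in> SB" by blast
    then have "E (-1) * v = E y * E (y+1)" using fB[OF y] Emul v_def by (metis mult_minus1)
    then show "E (-1) * v = 1" using y by (simp add: SB_def)
  qed
  have uvC: "SC \<noteq> {} \<Longrightarrow> u = -1 \<and> v = 1"
  proof -
    assume "SC \<noteq> {}" then obtain y where y: "y \<in> SC" by blast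
    have yv: "y + 1 = (b+1)/2" using fC[OF y] two by (simp add: field_simps)
    have "u = E y" unfolding u_def by (simp only: fC[OF y])
    moreover have "v = E (y+1)" unfolding v_def by (simp only: yv)
    ultimately show ?thesis using y by (simp add: SC_def)
  qed
  have uvD: "SD \<noteq> {} \<Longrightarrow> E (-1) * v = 1 \<and> E (-1) * u = -1"
  proof -
    assume "SD \<noteq> {}" then obtain y where y: "y \<in> SD" by blast
    have a1: "2 * y = -(b+1)"
    proof -
      have "2 * y = 2 * (-((b+1)/2))" by (simp only: fD[OF y])
      also have "\<dots> = -(2 * ((b+1)/2))" by (simp only: mult_minus_right)
      also have "\<dots> = -(b+1)" by (simp only: half2[OF two])
      finally show ?thesis .
    qed
    have a2: "2 * ((-1) * ((b-1)/2)) = -(b-1)"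
    proof -
      have "2 * ((-1) * ((b-1)/2)) = -(2 * ((b-1)/2))" by (simp only: mult_minus1 mult_minus_right)
      also have "\<dots> = -(b-1)" by (simp only: half2[OF two])
      finally show ?thesis .
    qed
    have "2 * (y+1) = 2 * y + 2" by (simp add: algebra_simps)
    also have "\<dots> = -(b+1) + 2" by (simp only: a1)
    also have "\<dots> = -(b-1)" by (simp add: algebra_simps)
    also have "\<dots> = 2 * ((-1) * ((b-1)/2))" by (simp only: a2)
    finally have "2 * (y+1) = 2 * ((-1) * ((b-1)/2))" .
    then have "y + 1 = (-1) * ((b-1)/2)" using two by (simp only: mult_cancel_left) simp
    moreover have "y = (-1) * ((b+1)/2)" by (simp only: fD[OF y] mult_minus1)
    ultimately have "E y = E (-1) * v" "E (y+1) = E (-1) * u" unfolding u_def v_def using Emul by metis+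
    then show ?thesis using y by (simp add: SD_def)
  qed
  have Zuv: "Z \<noteq> {} \<Longrightarrow> (b = 1 \<and> u = 0) \<or> (b = E (-1) \<and> (b = -1 \<longrightarrow> v = 0))"
  proof -
    assume "Z \<noteq> {}"
    then have "0 \<in> S \<or> -1 \<in> S" by (auto simp: Z_def)
    then show ?thesis using fZ0 fZ1 E0 by (auto simp: u_def v_def)
  qed
  have z1: "(0::'a) \<noteq> 1" by simp
  have z2: "(0::'a) \<noteq> -1" by simp
  have finS: "\<And>A::'a set. finite A" by simp
  have cA3: "E (-1) = -1 \<Longrightarrow> card SA \<le> 1"
  proof -
    assume m: "E (-1) = -1"
    have "\<forall>y1\<in>SA. \<forall>y2\<in>SA. y1 = y2"
    proof (intro ballI)
      fix y1 y2 assume y1: "y1 \<in> SA" and y2: "y2 \<in> SA"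
      have "y2 * (y2 + 1) = y1 * (y1 + 1)" by (simp only: fA[OF y1] fA[OF y2])
      then have "y2 = y1 \<or> y2 = (-1) * (y1 + 1)" by (rule other_root)
      moreover have "y2 \<noteq> (-1) * (y1 + 1)"
      proof
        assume hy: "y2 = (-1) * (y1 + 1)"
        have "E y2 = E (-1) * E (y1 + 1)" by (simp only: hy Emul)
        then show False using y1 y2 m om by (simp add: SA_def)
      qed
      ultimately show "y1 = y2" by simp
    qed
    then show ?thesis using card_le_Suc0_iff_eq[OF finS] by simp
  qed
  have cB3: "E (-1) = -1 \<Longrightarrow> card SB \<le> 1"
  proof -
    assume m: "E (-1) = -1"
    have "\<forall>y1\<in>SB. \<forall>y2\<in>SB. y1 = y2"
    proof (intro ballI)
      fix y1 y2 assume y1: "y1 \<in> SB" and y2: "y2 \<in> SB"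
      have "y2 * (y2 + 1) = y1 * (y1 + 1)" by (simp only: fB[OF y1] fB[OF y2])
      then have "y2 = y1 \<or> y2 = (-1) * (y1 + 1)" by (rule other_root)
      moreover have "y2 \<noteq> (-1) * (y1 + 1)"
      proof
        assume hy: "y2 = (-1) * (y1 + 1)"
        have "E y2 = E (-1) * E (y1 + 1)" by (simp only: hy Emul)
        then show False using y1 y2 m om by (simp add: SB_def)
      qed
      ultimately show "y1 = y2" by simp
    qed
    then show ?thesis using card_le_Suc0_iff_eq[OF finS] by simp
  qed
  have cZ3: "E (-1) = -1 \<Longrightarrow> card Z \<le> 1"
  proof -
    assume m: "E (-1) = -1"
    have "\<not> (0 \<in> S \<and> -1 \<in> S)" using fZ0 fZ1 m om by auto
    then have "\<forall>y1\<in>Z. \<forall>y2\<in>Z. y1 = y2" by (auto simp: Z_def)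
    then show ?thesis using card_le_Suc0_iff_eq[OF finS] by simp
  qed
  have card0: "\<And>A::'a set. A = {} \<Longrightarrow> card A = 0" by simp
  have "(card (UNIV::'a set) mod 4 = 1 \<longrightarrow> card S \<le> 4) \<and> (card (UNIV::'a set) mod 4 = 3 \<longrightarrow> card S \<le> 3)"
  proof (intro conjI impI)
    assume q1: "card (UNIV::'a set) mod 4 = 1"
    have m: "E (-1) = 1" using Em1a[OF q1] .
    have ZA: "Z \<noteq> {} \<Longrightarrow> u = 0"
    proof -
      assume "Z \<noteq> {}" then have "b = 1" using Zuv m by auto
      then show "u = 0" using E0 by (simp add: u_def)
    qed
    have AC: "SA \<noteq> {} \<Longrightarrow> SC = {} \<and> SD = {}" using uA uvC uvD m om by fastforce
    have ZAe: "Z \<noteq> {} \<Longrightarrow> SA = {} \<and> SC = {} \<and> SD = {}" using ZA uA uvC uvD m z1 z2 by fastforce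
    show "card S \<le> 4"
    proof (cases "Z = {}")
      case True
      show ?thesis
      proof (cases "SA = {}")
        case True
        then show ?thesis using \<open>Z = {}\<close> cS cB cC cD by simp
      next
        case False
        then show ?thesis using \<open>Z = {}\<close> AC cS cA cB by simp
      qed
    next
      case False
      then show ?thesis using ZAe cS cZ cB by simp
    qed
  next
    assume q3: "card (UNIV::'a set) mod 4 = 3"
    have m: "E (-1) = -1" using Em1b[OF q3] .
    have Zuv3: "Z \<noteq> {} \<Longrightarrow> u = 0 \<or> v = 0" using Zuv m by auto
    have vB3: "SB \<noteq> {} \<Longrightarrow> v = -1" using vB m by (metis minus_equation_iff mult_minus1)
    have uvD3: "SD \<noteq> {} \<Longrightarrow> v = -1 \<and> u = 1" using uvD m by (metis minus_equation_iff mult_minus1)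
    show "card S \<le> 3"
    proof (cases "SC = {}")
      case False
      then have uv: "u = -1" "v = 1" using uvC by auto
      have "SA = {}" using uA uv om by (metis minus_equation_iff)
      moreover have "SB = {}" using vB3 uv om by metis
      moreover have "SD = {}" using uvD3 uv om by metis
      moreover have "Z = {}" using Zuv3 uv z1 z2 by metis
      ultimately show ?thesis using cS cC by simp
    next
      case True
      show ?thesis
      proof (cases "Z = {}")
        case True
        then show ?thesis using \<open>SC = {}\<close> cS cA3[OF m] cB3[OF m] cD by simp
      next
        case False
        then have "u = 0 \<or> v = 0" using Zuv3 by blast
        then show ?thesis
        proof
          assume "u = 0"
          then have "SA = {}" "SD = {}" using uA uvD3 z1 by metis+
          then show ?thesis using \<open>SC = {}\<close> cS cZ3[OF m] cB3[OF m] by simp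
        next
          assume "v = 0"
          then have "SB = {}" "SD = {}" using vB3 uvD3 z2 by metis+
          then show ?thesis using \<open>SC = {}\<close> cS cZ3[OF m] cA3[OF m] by simp
        qed
      qed
    qed
  qed
  then show ?thesis by (simp add: S_def)
qed


lemma count_a0:
  fixes e :: "'a::{finite,field}"
  assumes oq: "odd (card (UNIV::'a set))" and q5: "card (UNIV::'a set) \<ge> 5"
    and hd: "h = (card (UNIV::'a set) - 1) div 2"
  shows "(card (UNIV::'a set) mod 4 = 1 \<longrightarrow> card {x. x^(h+2) = e} \<le> 4) \<and>
         (card (UNIV::'a set) mod 4 = 3 \<longrightarrow> card {x. x^(h+2) = e} \<le> 3)"
proof -
  define E where "E = (\<lambda>y::'a. y ^ h)"
  have two: "(2::'a) \<noteq> 0" using two_ne_zero_odd[OF oq] .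
  have h1: "h \<ge> 1" using hd q5 by simp
  have E0: "E 0 = 0" using h1 by (simp add: E_def)
  have Emul: "\<And>x y. E (x*y) = E x * E y" by (simp add: E_def power_mult_distrib)
  have Epm: "\<And>x. x \<noteq> 0 \<Longrightarrow> E x = 1 \<or> E x = -1" unfolding E_def using eta_pm[OF oq hd] by blast
  have Epow: "\<And>y. y^(h+2) = E y * y^2" by (simp add: E_def power_add power2_eq_square)
  have om: "(1::'a) \<noteq> -1"
  proof
    assume a: "(1::'a) = -1"
    from a have "(1::'a) + 1 = 1 + (-1)" by (rule arg_cong)
    then have "(2::'a) = 0" by simp
    then show False using two by simp
  qed
  have Em1a: "card (UNIV::'a set) mod 4 = 1 \<Longrightarrow> E (-1) = 1"
  proof -
    assume "card (UNIV::'a set) mod 4 = 1"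
    then have "even h" using hd h_even by simp
    then show ?thesis by (simp add: E_def)
  qed
  have Em1b: "card (UNIV::'a set) mod 4 = 3 \<Longrightarrow> E (-1) = -1"
  proof -
    assume "card (UNIV::'a set) mod 4 = 3"
    then have "odd h" using hd h_odd by simp
    then show ?thesis by (simp add: E_def)
  qed
  have finS: "\<And>A::'a set. finite A" by simp
  define T where "T = {x. x^(h+2) = e}"
  define T0 where "T0 = T \<inter> {0}"
  define P where "P = {x\<in>T. E x = 1}"
  define N where "N = {x\<in>T. E x = -1}"
  have Tsub: "T \<subseteq> T0 \<union> P \<union> N"
  proof
    fix x assume x: "x \<in> T"
    show "x \<in> T0 \<union> P \<union> N"
    proof (cases "x = 0")
      case True then show ?thesis using x by (simp add: T0_def)
    next
      case False then show ?thesis using x Epm[OF False] by (auto simp: P_def N_def)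
    qed
  qed
  have cT: "card T \<le> card T0 + card P + card N"
  proof -
    have 1: "card T \<le> card (T0 \<union> P \<union> N)" by (rule card_mono[OF _ Tsub]) simp
    have 2: "card (T0 \<union> P \<union> N) \<le> card (T0 \<union> P) + card N" by (rule card_Un_le)
    have 3: "card (T0 \<union> P) \<le> card T0 + card P" by (rule card_Un_le)
    from 1 2 3 show ?thesis by linarith
  qed
  have Tdef: "\<And>x. x \<in> T \<longleftrightarrow> E x * x^2 = e" by (simp only: T_def mem_Collect_eq Epow)
  have fP: "\<And>x. x \<in> P \<Longrightarrow> x^2 = e"
  proof -
    fix x assume "x \<in> P"
    then have m: "x \<in> T" and ex: "E x = 1" by (auto simp: P_def)
    have "E x * x^2 = e" using m Tdef by blast
    with ex show "x^2 = e" by simp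
  qed
  have fN: "\<And>x. x \<in> N \<Longrightarrow> x^2 = -e"
  proof -
    fix x assume "x \<in> N"
    then have m: "x \<in> T" and ex: "E x = -1" by (auto simp: N_def)
    have "E x * x^2 = e" using m Tdef by blast
    with ex have "- (x^2) = e" by simp
    then show "x^2 = -e" by (simp add: minus_equation_iff)
  qed
  have cP: "card P \<le> 2"
    by (rule le_trans[OF card_mono sq_card[of e]]) (auto dest: fP)
  have cN: "card N \<le> 2"
    by (rule le_trans[OF card_mono sq_card[of "-e"]]) (auto dest: fN)
  have cT0: "card T0 \<le> 1"
    by (rule le_trans[OF card_mono[of "{0}"]]) (auto simp: T0_def)
  have "(card (UNIV::'a set) mod 4 = 1 \<longrightarrow> card T \<le> 4) \<and> (card (UNIV::'a set) mod 4 = 3 \<longrightarrow> card T \<le> 3)"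
  proof (intro conjI impI)
    assume q1: "card (UNIV::'a set) mod 4 = 1"
    show "card T \<le> 4"
    proof (cases "T0 = {}")
      case True then show ?thesis using cT cP cN by simp
    next
      case False
      then have "0 \<in> T" by (auto simp: T0_def)
      then have e0: "e = 0" using Tdef E0 by simp
      have "P = {}"
      proof (rule ccontr)
        assume "P \<noteq> {}" then obtain x where x: "x \<in> P" by blast
        then have "x = 0" using fP[OF x] e0 by simp
        then show False using x E0 by (simp add: P_def)
      qed
      moreover have "N = {}"
      proof (rule ccontr)
        assume "N \<noteq> {}" then obtain x where x: "x \<in> N" by blast
        then have "x = 0" using fN[OF x] e0 by simp
        then show False using x E0 by (simp add: N_def)
      qed
      ultimately show ?thesis using cT cT0 by simp
    qed
  next
    assume q3: "card (UNIV::'a set) mod 4 = 3"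
    have m: "E (-1) = -1" using Em1b[OF q3] .
    have cP3: "card P \<le> 1"
    proof -
      have "\<forall>x1\<in>P. \<forall>x2\<in>P. x1 = x2"
      proof (intro ballI)
        fix x1 x2 assume x1: "x1 \<in> P" and x2: "x2 \<in> P"
        have "x2^2 = x1^2" by (simp only: fP[OF x1] fP[OF x2])
        then have "x2 = x1 \<or> x2 = - x1" by (simp add: power2_eq_iff)
        moreover have "x2 \<noteq> - x1"
        proof
          assume hy: "x2 = - x1"
          have "E x2 = E (-1) * E x1" by (simp only: hy Emul[symmetric] mult_minus1)
          then show False using x1 x2 m om by (simp add: P_def)
        qed
        ultimately show "x1 = x2" by simp
      qed
      then show ?thesis using card_le_Suc0_iff_eq[OF finS] by simp
    qed
    have cN3: "card N \<le> 1"
    proof -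
      have "\<forall>x1\<in>N. \<forall>x2\<in>N. x1 = x2"
      proof (intro ballI)
        fix x1 x2 assume x1: "x1 \<in> N" and x2: "x2 \<in> N"
        have "x2^2 = x1^2" by (simp only: fN[OF x1] fN[OF x2])
        then have "x2 = x1 \<or> x2 = - x1" by (simp add: power2_eq_iff)
        moreover have "x2 \<noteq> - x1"
        proof
          assume hy: "x2 = - x1"
          have "E x2 = E (-1) * E x1" by (simp only: hy Emul[symmetric] mult_minus1)
          then show False using x1 x2 m om by (simp add: N_def)
        qed
        ultimately show "x1 = x2" by simp
      qed
      then show ?thesis using card_le_Suc0_iff_eq[OF finS] by simp
    qed
    show "card T \<le> 3" using cT cT0 cP3 cN3 by simp
  qed
  then show ?thesis by (simp add: T_def)
qed


lemma count_all:
  fixes a b :: "'a::{finite,field}"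
  assumes oq: "odd (card (UNIV::'a set))" and q5: "card (UNIV::'a set) \<ge> 5"
    and hd: "h = (card (UNIV::'a set) - 1) div 2"
  shows "(card (UNIV::'a set) mod 4 = 1 \<longrightarrow> card {x. (x+a)^(h+2) - (-1) * x^(h+2) = b} \<le> 4) \<and>
         (card (UNIV::'a set) mod 4 = 3 \<longrightarrow> card {x. (x+a)^(h+2) - (-1) * x^(h+2) = b} \<le> 3)"
proof (cases "a = 0")
  case True
  have two: "(2::'a) \<noteq> 0" using two_ne_zero_odd[OF oq] .
  have "{x. (x+a)^(h+2) - (-1) * x^(h+2) = b} = {x. x^(h+2) = b / 2}"
  proof (rule Collect_cong)
    fix x :: 'a
    have "(x+a)^(h+2) - (-1) * x^(h+2) = 2 * x^(h+2)" using True by simp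
    then show "((x+a)^(h+2) - (-1) * x^(h+2) = b) = (x^(h+2) = b / 2)"
      using two by (auto simp: eq_divide_eq mult.commute)
  qed
  then show ?thesis using count_a0[OF oq q5 hd, of "b/2"] by simp
next
  case False
  let ?k = "h + 2"
  have ak: "a ^ ?k \<noteq> 0" using False by simp
  have key: "\<And>y. ((a*y + a)^?k - (-1) * (a*y)^?k = b) \<longleftrightarrow> ((y+1)^?k + y^?k = b / a^?k)"
  proof -
    fix y
    have ay: "a*y + a = a*(y+1)" by (simp add: algebra_simps)
    have "(a*y + a)^?k - (-1) * (a*y)^?k = a^?k * (y+1)^?k - (-1) * (a^?k * y^?k)"
      by (simp only: ay power_mult_distrib)
    also have "\<dots> = a^?k * ((y+1)^?k + y^?k)"
      by (simp only: distrib_left mult_minus1 diff_minus_eq_add minus_minus)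
    finally have "(a*y + a)^?k - (-1) * (a*y)^?k = a^?k * ((y+1)^?k + y^?k)" .
    then show "((a*y + a)^?k - (-1) * (a*y)^?k = b) \<longleftrightarrow> ((y+1)^?k + y^?k = b / a^?k)"
      using ak by (auto simp: eq_divide_eq mult.commute)
  qed
  have img: "{x. (x+a)^?k - (-1) * x^?k = b} = (\<lambda>y. a*y) ` {y. (a*y + a)^?k - (-1) * (a*y)^?k = b}"
  proof
    show "{x. (x+a)^?k - (-1) * x^?k = b} \<subseteq> (\<lambda>y. a*y) ` {y. (a*y + a)^?k - (-1) * (a*y)^?k = b}"
    proof
      fix x assume x: "x \<in> {x. (x+a)^?k - (-1) * x^?k = b}"
      have "x = a * (x / a)" using False by simp
      then show "x \<in> (\<lambda>y. a*y) ` {y. (a*y + a)^?k - (-1) * (a*y)^?k = b}"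
        using x by (metis (mono_tags, lifting) image_eqI mem_Collect_eq)
    qed
  qed auto
  have inj: "inj_on (\<lambda>y. a*y) A" for A using False by (auto simp: inj_on_def)
  have "card {x. (x+a)^?k - (-1) * x^?k = b} = card {y. (y+1)^?k + y^?k = b / a^?k}"
  proof -
    have es: "{y. (a*y + a)^?k - (-1) * (a*y)^?k = b} = {y. (y+1)^?k + y^?k = b / a^?k}" using key by blast
    show ?thesis by (simp only: img card_image[OF inj] es)
  qed
  then show ?thesis using count_a1[OF oq q5 hd, of "b / a^?k"] by simp
qed

theorem theorem7:
  fixes p n :: nat and F :: "'a::{finite,field} \<Rightarrow> 'a"
  defines "F \<equiv> (\<lambda>x. x ^ ((p ^ n + 3) div 2))"
  assumes "prime p" and "p > 3" and "n > 0"
    and "card (UNIV :: 'a set) = p ^ n"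
  shows "(p ^ n mod 4 = 1 \<longrightarrow>
            c_diff_uniformity F (-1) \<le> 4) \<and>
         (p ^ n mod 4 = 3 \<longrightarrow>
            c_diff_uniformity F (-1) \<le> 3)"
proof -
  have op: "odd p" using prime_odd_nat[OF assms(2)] assms(3) by simp
  have oq: "odd (card (UNIV::'a set))" using op assms(5) by simp
  have "p \<le> p ^ n" using assms(3,4) by (simp add: self_le_power)
  then have q4: "card (UNIV::'a set) \<ge> 4" using assms(3,5) by simp
  have q5: "card (UNIV::'a set) \<ge> 5"
  proof (rule ccontr)
    assume "\<not> ?thesis"
    then have "card (UNIV::'a set) = 4" using q4 by simp
    then show False using oq by simp
  qed
  define h where "h = (card (UNIV::'a set) - 1) div 2"
  have dh: "(p ^ n + 3) div 2 = h + 2"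
  proof -
    obtain k where k: "card (UNIV::'a set) = 2 * k + 1" using oq oddE by blast
    show ?thesis unfolding h_def using k assms(5) by simp
  qed
  have Fd: "F = (\<lambda>x. x ^ (h + 2))" unfolding F_def dh ..
  define B :: nat where "B = (if p ^ n mod 4 = 1 then 4 else 3)"
  have cnt: "\<And>a b. (p ^ n mod 4 = 1 \<longrightarrow> c_diff_count F (-1) a b \<le> 4) \<and>
                    (p ^ n mod 4 = 3 \<longrightarrow> c_diff_count F (-1) a b \<le> 3)"
    unfolding c_diff_count_def Fd using count_all[OF oq q5 h_def] assms(5) by simp
  define M where "M = {c_diff_count F (-1) a b | a b. (-1::'a) \<noteq> 1 \<or> a \<noteq> 0}"
  have finM: "finite M"
  proof -
    have "M \<subseteq> (\<lambda>(a,b). c_diff_count F (-1) a b) ` UNIV" unfolding M_def by auto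
    then show ?thesis by (rule finite_subset) simp
  qed
  have "c_diff_count F (-1) 1 0 \<in> M" unfolding M_def
    by (rule CollectI, rule exI[of _ 1], rule exI[of _ 0]) simp
  then have neM: "M \<noteq> {}" by blast
  show ?thesis
  proof (intro conjI impI)
    assume q1: "p ^ n mod 4 = 1"
    have "\<forall>m\<in>M. m \<le> 4" unfolding M_def using cnt q1 by auto
    then show "c_diff_uniformity F (-1) \<le> 4"
      unfolding c_diff_uniformity_def M_def[symmetric] using Max_le_iff[OF finM neM] by simp
  next
    assume q3: "p ^ n mod 4 = 3"
    have "\<forall>m\<in>M. m \<le> 3" unfolding M_def using cnt q3 by auto
    then show "c_diff_uniformity F (-1) \<le> 3"
      unfolding c_diff_uniformity_def M_def[symmetric] using Max_le_iff[OF finM neM] by simp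
  qed
qed

end
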